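(* Let $A$ be Hurwitz and let $M_{\rm initial},\sigma_{\rm slowest}>0$ satisfy $\|e^{At}\|_2\le M_{\rm initial}e^{-\sigma_{\rm slowest}t}$ for all $t\ge0$. Let $\widetilde M_{\rm loose}=2M_{\rm initial}\|B\|_2/\sigma_{\rm slowest}$ and $\mathcal{B}_{\rm ultimate}=\{x\in\mathbb{R}^n:\|x\|_2\le\widetilde M_{\rm loose}\}$. Let $x(\cdot)$ be a trajectory of the relay feedback system $\dot x=Ax-B\,\mathrm{sign}(Cx)$ with $x(0)\in\mathcal{B}_{\rm ultimate}$. Then for all times $t$ greater than $t_{\rm excursions\text{-}over}=\frac{1}{\sigma_{\rm slowest}}\log(2M_{\rm initial})$, $x(t)\in\mathcal{B}_{\rm ultimate}$ (although at earlier times the state may leave $\mathcal{B}_{\rm ultimate}$).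
   Context: $A$ is the $n\times n$ observer canonical matrix ($A_{i+1,i}=1$ for $i=1,\dots,n-1$, last column $(-a_0,\dots,-a_{n-1})^T$, other entries zero), $B=(b_0,\dots,b_{n-1})^T$, $C=(0,\dots,0,1)$. $\mathrm{sign}(e)=1$ for $e>0$, $-1$ for $e<0$, and $[-1,1]$ for $e=0$; trajectories are (Filippov) solutions, and on the switching set one uses non-sliding solutions. *)

theory Defs
  imports "HOL-Analysis.Analysis"
begin

definition idx_pos :: "'n::{finite,linorder} \<Rightarrow> nat" where
  "idx_pos i = card {j. j < i}"

(* Observer canonical matrix: A_{i+1,i} = 1, last column (-a_0,...,-a_{n-1})^T, else 0
   (positions are 0-based here, the last index is the maximum of the order, so row position r corresponds to row r+1 of the paper). *)
definition obs_canon :: "(nat \<Rightarrow> real) \<Rightarrow> real^('n::{finite,linorder})^('n::{finite,linorder})" where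
  "obs_canon a = (\<chi> i j.
      (if idx_pos i = idx_pos j + 1 then 1 else 0)
    + (if (\<forall>k. k \<le> j) then - a (idx_pos i) else 0))"

definition obs_B :: "(nat \<Rightarrow> real) \<Rightarrow> real^'n::{finite,linorder}" where
  "obs_B b = (\<chi> i. b (idx_pos i))"

(* C x = last component of x, i.e. C = (0,...,0,1) *)
definition obs_C :: "real^'n::{finite,linorder} \<Rightarrow> real" where
  "obs_C x = (\<Sum>i\<in>UNIV. (if (\<forall>k. k \<le> i) then 1 else 0) * x $ i)"

definition hurwitz :: "real^('n::finite)^('n::finite) \<Rightarrow> bool" where
  "hurwitz A \<longleftrightarrow> (\<forall>(lam::complex) (v::complex^'n). v \<noteq> 0 \<and>
      (\<chi> i j. complex_of_real (A $ i $ j)) *v v = lam *s v \<longrightarrow> Re lam < 0)"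

fun mpow :: "real^('n::finite)^('n::finite) \<Rightarrow> nat \<Rightarrow> real^'n^'n" where
  "mpow A 0 = mat 1"
| "mpow A (Suc k) = A ** mpow A k"

definition mexp :: "real^('n::finite)^('n::finite) \<Rightarrow> real^'n^'n" where
  "mexp A = (\<Sum>k. (1 / fact k) *\<^sub>R mpow A k)"

definition mnorm2 :: "real^('n::finite)^('n::finite) \<Rightarrow> real" where
  "mnorm2 M = onorm (\<lambda>v. M *v v)"

definition sign_set :: "real \<Rightarrow> real set" where
  "sign_set e = (if e > 0 then {1} else if e < 0 then {-1} else {-1..1})"

(* (Filippov) solution of  x' = A x - B sign(C x)  on [0,\<infinity>):
   absolutely continuous x with x' (t) \<in> A x(t) - B sign(C x(t)) a.e., written in
   integral form with a selection u(s) \<in> sign(C x(s)). *)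
definition relay_solution ::
  "real^('n::finite)^('n::finite) \<Rightarrow> real^'n \<Rightarrow> (real^'n \<Rightarrow> real) \<Rightarrow> (real \<Rightarrow> real^'n) \<Rightarrow> bool" where
  "relay_solution A B C x \<longleftrightarrow> (\<exists>u::real \<Rightarrow> real.
      (\<forall>s\<ge>0. u s \<in> sign_set (C (x s))) \<and>
      (\<forall>t\<ge>0. ((\<lambda>s. A *v x s - u s *\<^sub>R B) has_integral (x t - x 0)) {0..t}))"

end

theory Submission
  imports Defs
begin

typedef (overloaded) ('n::finite) sqm = "UNIV :: ((real^'n) \<Rightarrow>\<^sub>L (real^'n)) set"
  morphisms rep_sqm Abs_sqm by simp

setup_lifting type_definition_sqm

instantiation sqm :: (finite) real_normed_algebra_1
begin

lift_definition norm_sqm :: "'a sqm \<Rightarrow> real" is norm .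
lift_definition minus_sqm :: "'a sqm \<Rightarrow> 'a sqm \<Rightarrow> 'a sqm" is "(-)" .
lift_definition plus_sqm :: "'a sqm \<Rightarrow> 'a sqm \<Rightarrow> 'a sqm" is "(+)" .
lift_definition uminus_sqm :: "'a sqm \<Rightarrow> 'a sqm" is "uminus" .
lift_definition zero_sqm :: "'a sqm" is "0" .
lift_definition scaleR_sqm :: "real \<Rightarrow> 'a sqm \<Rightarrow> 'a sqm" is "scaleR" .
lift_definition times_sqm :: "'a sqm \<Rightarrow> 'a sqm \<Rightarrow> 'a sqm" is "blinfun_compose" .
lift_definition one_sqm :: "'a sqm" is "id_blinfun" .

definition dist_sqm :: "'a sqm \<Rightarrow> 'a sqm \<Rightarrow> real"
  where "dist_sqm a b = norm (a - b)"

definition uniformity_sqm :: "('a sqm \<times> 'a sqm) filter"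
  where "uniformity_sqm = (INF e\<in>{0 <..}. principal {(x, y). dist x y < e})"

definition open_sqm :: "'a sqm set \<Rightarrow> bool"
  where "open_sqm S = (\<forall>x\<in>S. \<forall>\<^sub>F (x', y) in uniformity. x' = x \<longrightarrow> y \<in> S)"

definition sgn_sqm :: "'a sqm \<Rightarrow> 'a sqm"
  where "sgn_sqm x = scaleR (inverse (norm x)) x"

instance
proof
  fix x y z :: "'a sqm" and a b :: real
  show "x + y + z = x + (y + z)" by transfer (simp add: add.assoc)
  show "x + y = y + x" by transfer (simp add: add.commute)
  show "0 + x = x" by transfer simp
  show "- x + x = 0" by transfer simp
  show "x - y = x + - y" by transfer simp
  show "a *\<^sub>R (x + y) = a *\<^sub>R x + a *\<^sub>R y" by transfer (simp add: scaleR_add_right)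
  show "(a + b) *\<^sub>R x = a *\<^sub>R x + b *\<^sub>R x" by transfer (simp add: scaleR_add_left)
  show "a *\<^sub>R b *\<^sub>R x = (a * b) *\<^sub>R x" by transfer simp
  show "1 *\<^sub>R x = x" by transfer simp
  show "a *\<^sub>R x * y = a *\<^sub>R (x * y)" by transfer (rule blinfun_eqI, simp add: blinfun.bilinear_simps)
  show "x * a *\<^sub>R y = a *\<^sub>R (x * y)" by transfer (rule blinfun_eqI, simp add: blinfun.bilinear_simps)
  show "x * y * z = x * (y * z)" by transfer (rule blinfun_eqI, simp)
  show "(x + y) * z = x * z + y * z" by transfer (rule blinfun_eqI, simp add: blinfun.bilinear_simps)
  show "x * (y + z) = x * y + x * z" by transfer (rule blinfun_eqI, simp add: blinfun.bilinear_simps)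
  show "1 * x = x" by transfer (rule blinfun_eqI, simp)
  show "x * 1 = x" by transfer (rule blinfun_eqI, simp)
  show "(0::'a sqm) \<noteq> 1"
  proof
    assume "(0::'a sqm) = 1"
    then have "norm (0::'a sqm) = norm (1::'a sqm)" by simp
    then show False by transfer simp
  qed
  show "norm (x * y) \<le> norm x * norm y" by transfer (rule norm_blinfun_compose)
  show "norm (1::'a sqm) = 1" by transfer simp
  show "(norm x = 0) = (x = 0)" by transfer simp
  show "norm (x + y) \<le> norm x + norm y" by transfer (rule norm_triangle_ineq)
  show "norm (a *\<^sub>R x) = \<bar>a\<bar> * norm x" by transfer simp
  show "sgn x = inverse (norm x) *\<^sub>R x" by (simp add: sgn_sqm_def)
  show "dist x y = norm (x - y)" by (simp add: dist_sqm_def)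
  show "(uniformity :: ('a sqm \<times> 'a sqm) filter) = (INF e\<in>{0 <..}. principal {(x, y). dist x y < e})"
    by (simp add: uniformity_sqm_def)
  fix U :: "'a sqm set"
  show "open U = (\<forall>x\<in>U. \<forall>\<^sub>F (x', y) in uniformity. x' = x \<longrightarrow> y \<in> U)"
    by (simp add: open_sqm_def)
qed
end

lemma norm_rep_sqm: "norm (rep_sqm x) = norm x" by transfer simp
lemma rep_sqm_diff: "rep_sqm (x - y) = rep_sqm x - rep_sqm y" by transfer simp

instance sqm :: (finite) banach
proof
  fix X :: "nat \<Rightarrow> 'a sqm"
  assume "Cauchy X"
  then have "Cauchy (\<lambda>n. rep_sqm (X n))"
    unfolding Cauchy_def dist_norm by (simp add: norm_rep_sqm[symmetric] rep_sqm_diff)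
  then obtain L where L: "(\<lambda>n. rep_sqm (X n)) \<longlonglongrightarrow> L"
    using convergent_eq_Cauchy by blast
  have "X \<longlonglongrightarrow> Abs_sqm L"
    using L unfolding lim_sequentially dist_norm
    by (metis Abs_sqm_inverse UNIV_I norm_rep_sqm rep_sqm_diff)
  then show "convergent X" by (auto simp: convergent_def)
qed


definition app :: "'n::finite sqm \<Rightarrow> real^'n \<Rightarrow> real^'n" where
  "app S v = blinfun_apply (rep_sqm S) v"

lift_definition sqm_of :: "real^'n^'n \<Rightarrow> 'n::finite sqm" is "\<lambda>M. Blinfun (\<lambda>v. M *v v)" .

lemma app_sqm_of[simp]: "app (sqm_of M) v = M *v v"
  unfolding app_def by transfer (simp add: bounded_linear_Blinfun_apply)

lemma app_mult[simp]: "app (S * T) v = app S (app T v)"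
  unfolding app_def by transfer simp

lemma app_one[simp]: "app 1 v = v"
  unfolding app_def by transfer simp

lemma app_diff: "app (S - T) v = app S v - app T v"
  unfolding app_def by transfer (simp add: blinfun.bilinear_simps)

lemma app_scaleR: "app (a *\<^sub>R S) v = a *\<^sub>R app S v"
  unfolding app_def by transfer (simp add: blinfun.bilinear_simps)

lemma app_vdiff: "app S (v - w) = app S v - app S w"
  unfolding app_def by (simp add: blinfun.bilinear_simps)

lemma norm_app: "norm (app S v) \<le> norm S * norm v"
  unfolding app_def by transfer (rule norm_blinfun)

lemma bounded_linear_app_left: "bounded_linear (\<lambda>S. app S v)"
proof (rule bounded_linear_intro[where K="norm v"])
  fix S T :: "'a sqm" and r :: real
  show "app (S + T) v = app S v + app T v" unfolding app_def by transfer (simp add: blinfun.bilinear_simps)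
  show "app (r *\<^sub>R S) v = r *\<^sub>R app S v" by (rule app_scaleR)
  show "norm (app S v) \<le> norm S * norm v" by (rule norm_app)
qed

lemma bounded_linear_app_right: "bounded_linear (app S)"
  unfolding app_def by (rule blinfun.bounded_linear_right)

lemma sqm_of_mult: "sqm_of (M ** N) = sqm_of M * sqm_of N"
  by transfer (rule blinfun_eqI, simp add: bounded_linear_Blinfun_apply matrix_vector_mul_assoc)

lemma sqm_of_one: "sqm_of (mat 1) = 1"
  by transfer (rule blinfun_eqI, simp add: bounded_linear_Blinfun_apply)

lemma sqm_of_mpow: "sqm_of (mpow M k) = (sqm_of M) ^ k"
  by (induction k) (simp_all add: sqm_of_one sqm_of_mult)

lemma norm_sqm_of: "norm (sqm_of M) = mnorm2 M"
  unfolding mnorm2_def by transfer (simp add: bounded_linear_Blinfun_apply norm_blinfun.rep_eq)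

lemma sqm_of_scaleR: "sqm_of (a *\<^sub>R M) = a *\<^sub>R sqm_of M"
  by transfer (rule blinfun_eqI, simp add: bounded_linear_Blinfun_apply blinfun.bilinear_simps scaleR_matrix_vector_assoc)

lemma sums_vec:
  fixes f :: "nat \<Rightarrow> 'a::real_normed_vector^'n"
  assumes "\<And>i. (\<lambda>k. f k $ i) sums (s $ i)" shows "f sums s"
  using assms unfolding sums_def by (intro vec_tendstoI) simp

lemma mpow_entry: "mpow M k $ i $ j = app (sqm_of M ^ k) (axis j 1) $ i"
proof -
  have "app (sqm_of M ^ k) (axis j 1) = mpow M k *v axis j 1"
    by (simp add: sqm_of_mpow[symmetric])
  then show ?thesis by (simp add: matrix_vector_mult_def axis_def if_distrib cong: if_cong)
qed

lemma mexp_eq: fixes M :: "real^'n::finite^'n" shows "mexp M = matrix (app (exp (sqm_of M)))"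
proof -
  let ?L = "sqm_of M"
  have "(\<lambda>k. (1 / fact k) *\<^sub>R mpow M k) sums matrix (app (exp ?L))"
  proof (rule sums_vec, rule sums_vec)
    fix i j :: 'n
    have bl: "bounded_linear (\<lambda>S. app S (axis j 1) $ i)"
      using bounded_linear_compose[OF bounded_linear_vec_nth bounded_linear_app_left] .
    have "(\<lambda>k. app (?L^k /\<^sub>R fact k) (axis j 1) $ i) sums (app (exp ?L) (axis j 1) $ i)"
      by (rule bounded_linear.sums[OF bl exp_converges])
    then show "(\<lambda>k. ((1 / fact k) *\<^sub>R mpow M k) $ i $ j) sums (matrix (app (exp ?L)) $ i $ j)"
      by (simp add: matrix_def mpow_entry app_scaleR divide_inverse_commute)
  qed
  then show ?thesis unfolding mexp_def by (rule sums_unique[symmetric])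
qed

lemma mexp_app: "mexp M *v v = app (exp (sqm_of M)) v"
  unfolding mexp_eq by (simp add: bounded_linear_app_right)

lemma mnorm2_mexp: "mnorm2 (mexp M) = norm (exp (sqm_of M))"
proof -
  have "sqm_of (mexp M) = exp (sqm_of M)"
    unfolding app_def
    by (metis app_def app_sqm_of blinfun_eqI mexp_app rep_sqm_inject)
  then show ?thesis by (metis norm_sqm_of)
qed


lemma dini_bound_eps:
  fixes \<phi> :: "real \<Rightarrow> 'a::real_normed_vector" and g g' :: "real \<Rightarrow> real"
  assumes ab: "a \<le> b" and cont: "continuous_on {a..b} \<phi>"
    and der: "\<And>s. s \<in> {a..b} \<Longrightarrow> (g has_real_derivative g' s) (at s)"
    and dini: "\<And>s e. s \<in> {a..<b} \<Longrightarrow> e > 0 \<Longrightarrow>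
         eventually (\<lambda>h. s + h \<le> b \<longrightarrow> norm (\<phi> (s+h) - \<phi> s) \<le> (g' s + e) * h) (at_right 0)"
    and ep: "\<epsilon> > 0"
  shows "norm (\<phi> b - \<phi> a) \<le> g b - g a + \<epsilon> * (b - a)"
proof -
  define P where "P r \<longleftrightarrow> norm (\<phi> r - \<phi> a) \<le> g r - g a + \<epsilon> * (r - a)" for r
  define K where "K = {r\<in>{a..b}. P r}"
  have gcont: "continuous_on {a..b} g"
    using der by (meson DERIV_continuous continuous_at_imp_continuous_on)
  have "closed ({a..b} \<inter> (\<lambda>r. g r - g a + \<epsilon> * (r - a) - norm (\<phi> r - \<phi> a)) -` {0..})"
    by (rule continuous_closed_preimage) (auto intro!: continuous_intros gcont cont)
  moreover have "{a..b} \<inter> (\<lambda>r. g r - g a + \<epsilon> * (r - a) - norm (\<phi> r - \<phi> a)) -` {0..} = K"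
    unfolding K_def P_def by auto
  ultimately have Kc: "closed K" by simp
  define S where "S = {s\<in>{a..b}. {a..s} \<subseteq> K}"
  have aS: "a \<in> S" unfolding S_def K_def P_def using ab by auto
  have bdd: "bdd_above S" unfolding S_def by (auto intro: bdd_aboveI[where M=b])
  define c where "c = Sup S"
  have ac: "a \<le> c" unfolding c_def using aS bdd by (meson cSup_upper)
  have cb: "c \<le> b" unfolding c_def using aS by (intro cSup_least) (auto simp: S_def)
  have below: "{a..<c} \<subseteq> K"
  proof
    fix r assume r: "r \<in> {a..<c}"
    then obtain s where "s \<in> S" "r < s" unfolding c_def using less_cSup_iff[OF _ bdd] aS
      by (metis atLeastLessThan_iff empty_iff)
    then show "r \<in> K" using r unfolding S_def by auto
  qed
  have cK: "{a..c} \<subseteq> K"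
  proof (cases "a = c")
    case True then show ?thesis using aS unfolding S_def by auto
  next
    case False
    then have "closure {a..<c} = {a..c}" using ac by (simp add: closure_atLeastLessThan)
    then show ?thesis using closure_minimal[OF below Kc] by simp
  qed
  have "c = b"
  proof (rule ccontr)
    assume "c \<noteq> b"
    then have cb': "c < b" using cb by simp
    have e2: "\<epsilon>/2 > 0" using ep by simp
    have ev1: "eventually (\<lambda>h. c + h \<le> b \<longrightarrow> norm (\<phi> (c+h) - \<phi> c) \<le> (g' c + \<epsilon>/2) * h) (at_right 0)"
      using dini[OF _ e2] ac cb' by simp
    have "((\<lambda>h. (g (c + h) - g c) / h) \<longlongrightarrow> g' c) (at 0)"
      using der[of c] ac cb by (simp add: DERIV_def)
    then have "eventually (\<lambda>h. g' c - \<epsilon>/2 < (g (c + h) - g c) / h) (at 0)"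
      using e2 by (intro order_tendstoD(1)) auto
    then have ev2: "eventually (\<lambda>h. g' c - \<epsilon>/2 < (g (c + h) - g c) / h) (at_right 0)"
      by (rule filter_leD[OF at_le[OF subset_UNIV], rotated])
    have ev3: "eventually (\<lambda>h. 0 < h) (at_right (0::real))" by (rule eventually_at_right_less)
    from eventually_conj[OF ev1 eventually_conj[OF ev2 ev3]]
    obtain d where d: "d > 0" and dP: "\<And>h. 0 < h \<Longrightarrow> h < d \<Longrightarrow>
        (c + h \<le> b \<longrightarrow> norm (\<phi> (c+h) - \<phi> c) \<le> (g' c + \<epsilon>/2) * h) \<and> g' c - \<epsilon>/2 < (g (c + h) - g c) / h"
      unfolding eventually_at_right_field by auto
    define h0 where "h0 = min (d/2) (b - c)"
    have h0: "0 < h0" "h0 < d" "c + h0 \<le> b" unfolding h0_def using d cb' by auto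
    have "{a..c+h0} \<subseteq> K"
    proof
      fix r assume r: "r \<in> {a..c+h0}"
      show "r \<in> K"
      proof (cases "r \<le> c")
        case True then show ?thesis using cK r by auto
      next
        case False
        define h where "h = r - c"
        have h: "0 < h" "h < d" "c + h \<le> b" "r = c + h" using False r h0 unfolding h_def by auto
        have n1: "norm (\<phi> (c+h) - \<phi> c) \<le> (g' c + \<epsilon>/2) * h" using dP[OF h(1,2)] h(3) by simp
        have "g' c - \<epsilon>/2 < (g (c + h) - g c) / h" using dP[OF h(1,2)] by simp
        then have n2: "(g' c - \<epsilon>/2) * h < g (c + h) - g c" using h(1) by (simp add: field_simps)
        have Pc: "P c" using cK ac unfolding K_def by auto
        have "norm (\<phi> (c+h) - \<phi> a) \<le> norm (\<phi> (c+h) - \<phi> c) + norm (\<phi> c - \<phi> a)"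
          by (metis diff_add_cancel norm_triangle_ineq add_diff_eq)
        also have "\<dots> \<le> g (c+h) - g a + \<epsilon> * (c + h - a)"
          using n1 n2 Pc unfolding P_def by (simp add: algebra_simps)
        finally have "P r" unfolding P_def h(4) .
        then show ?thesis unfolding K_def using r h ac by auto
      qed
    qed
    then have "c + h0 \<in> S" unfolding S_def using h0 ac by auto
    then have "c + h0 \<le> c" unfolding c_def using bdd by (rule cSup_upper)
    then show False using h0 by simp
  qed
  then have "b \<in> K" using cK ac by auto
  then show ?thesis unfolding K_def P_def by simp
qed

lemma dini_bound:
  fixes \<phi> :: "real \<Rightarrow> 'a::real_normed_vector" and g g' :: "real \<Rightarrow> real"
  assumes ab: "a \<le> b" and cont: "continuous_on {a..b} \<phi>"
    and der: "\<And>s. s \<in> {a..b} \<Longrightarrow> (g has_real_derivative g' s) (at s)"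
    and dini: "\<And>s e. s \<in> {a..<b} \<Longrightarrow> e > 0 \<Longrightarrow>
         eventually (\<lambda>h. s + h \<le> b \<longrightarrow> norm (\<phi> (s+h) - \<phi> s) \<le> (g' s + e) * h) (at_right 0)"
  shows "norm (\<phi> b - \<phi> a) \<le> g b - g a"
proof (rule field_le_epsilon)
  fix e :: real assume e: "0 < e"
  define \<epsilon> where "\<epsilon> = e / (b - a + 1)"
  have ep: "\<epsilon> > 0" using e ab unfolding \<epsilon>_def by simp
  have "\<epsilon> * (b - a) \<le> e" unfolding \<epsilon>_def using e ab by (simp add: field_simps)
  then show "norm (\<phi> b - \<phi> a) \<le> g b - g a + e"
    using dini_bound_eps[OF ab cont der dini ep] by simp
qed


lemma app_add: "app (S + T) v = app S v + app T v"
  unfolding app_def by transfer (simp add: blinfun.bilinear_simps)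

lemma bounded_bilinear_app: "bounded_bilinear app"
proof (rule bounded_bilinear.intro)
  fix S T :: "'a sqm" and v w :: "real^'a" and r :: real
  show "app (S + T) v = app S v + app T v" by (rule app_add)
  show "app S (v + w) = app S v + app S w" unfolding app_def by (simp add: blinfun.bilinear_simps)
  show "app (r *\<^sub>R S) v = r *\<^sub>R app S v" by (rule app_scaleR)
  show "app S (r *\<^sub>R v) = r *\<^sub>R app S v" unfolding app_def by (simp add: blinfun.bilinear_simps)
  show "\<exists>K. \<forall>S v. norm (app S v) \<le> norm S * norm v * K"
    by (rule exI[where x=1]) (simp add: norm_app)
qed

lemma E_small:
  fixes L :: "'n::finite sqm"
  assumes "e > 0"
  shows "eventually (\<lambda>h. norm (exp (h *\<^sub>R L) - 1 - h *\<^sub>R L) \<le> e * h) (at_right 0)"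
proof -
  have "((\<lambda>h. exp (h *\<^sub>R L)) has_vector_derivative exp (0 *\<^sub>R L) * L) (at 0)"
    by (rule exp_scaleR_has_vector_derivative_right)
  then have "((\<lambda>h. exp (h *\<^sub>R L)) has_derivative (\<lambda>h. h *\<^sub>R L)) (at 0)"
    by (simp add: has_vector_derivative_def)
  then have "((\<lambda>h. ((exp (h *\<^sub>R L) - exp (0 *\<^sub>R L)) - (h - 0) *\<^sub>R L) /\<^sub>R norm (h - 0)) \<longlongrightarrow> 0) (at 0)"
    unfolding has_derivative_at_within by blast
  then have "((\<lambda>h. (exp (h *\<^sub>R L) - 1 - h *\<^sub>R L) /\<^sub>R \<bar>h\<bar>) \<longlongrightarrow> 0) (at 0)"
    by simp
  then have "eventually (\<lambda>h. dist ((exp (h *\<^sub>R L) - 1 - h *\<^sub>R L) /\<^sub>R \<bar>h\<bar>) 0 < e) (at 0)"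
    using assms by (rule tendstoD)
  then have "eventually (\<lambda>h. dist ((exp (h *\<^sub>R L) - 1 - h *\<^sub>R L) /\<^sub>R \<bar>h\<bar>) 0 < e) (at_right 0)"
    by (rule filter_leD[OF at_le[OF subset_UNIV], rotated])
  moreover have "eventually (\<lambda>h. 0 < h) (at_right (0::real))" by (rule eventually_at_right_less)
  ultimately show ?thesis
  proof eventually_elim
    case (elim h)
    then have "norm (exp (h *\<^sub>R L) - 1 - h *\<^sub>R L) / h < e" by (simp add: divide_inverse_commute)
    then show ?case using elim(2) by (simp add: field_simps)
  qed
qed


lemma main_bound:
  fixes A :: "real^'n::finite^'n" and B :: "real^'n" and x :: "real \<Rightarrow> real^'n" and u :: "real \<Rightarrow> real"
  assumes M: "M > 0" and sg: "\<sigma> > 0"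
    and Eb: "\<And>t. t \<ge> 0 \<Longrightarrow> norm (exp (t *\<^sub>R sqm_of A)) \<le> M * exp (- \<sigma> * t)"
    and ub: "\<And>s. s \<ge> 0 \<Longrightarrow> \<bar>u s\<bar> \<le> 1"
    and int: "\<And>t. t \<ge> 0 \<Longrightarrow> ((\<lambda>s. A *v x s - u s *\<^sub>R B) has_integral (x t - x 0)) {0..t}"
    and t: "t \<ge> 0"
  shows "norm (x t) \<le> M * exp (- \<sigma> * t) * norm (x 0) + M * norm B / \<sigma> * (1 - exp (- \<sigma> * t))"
proof -
  define L where "L = sqm_of A"
  define E where "E r = exp (r *\<^sub>R L)" for r
  define f where "f = (\<lambda>s. A *v x s - u s *\<^sub>R B)"
  define \<beta> where "\<beta> = norm B"
  have Eadd: "E (p + q) = E p * E q" for p q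
    unfolding E_def by (simp add: scaleR_add_left exp_add_commuting)
  have E0: "E 0 = 1" by (simp add: E_def)
  have Eb': "norm (E r) \<le> M * exp (- \<sigma> * r)" if "r \<ge> 0" for r
    using Eb[OF that] by (simp add: E_def L_def)
  have Econt: "continuous_on UNIV E"
    unfolding E_def by (rule continuous_on_vector_derivative) (rule exp_scaleR_has_vector_derivative_right)
  have fint: "f integrable_on {0..t}" using int[OF t] unfolding f_def by blast
  have xeq: "x r = x 0 + integral {0..r} f" if "r \<in> {0..t}" for r
    using int[of r] that unfolding f_def by (auto dest: integral_unique)
  have xcont: "continuous_on {0..t} x"
  proof -
    have "continuous_on {0..t} (\<lambda>r. x 0 + integral {0..r} f)"
      by (rule continuous_on_add[OF continuous_on_const indefinite_integral_continuous_1[OF fint]])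
    then show ?thesis by (rule continuous_on_eq) (rule xeq[symmetric])
  qed
  define w where "w s = app (E (t - s)) (x s)" for s
  define g where "g s = M * \<beta> / \<sigma> * exp (- \<sigma> * (t - s))" for s
  define g' where "g' s = M * \<beta> * exp (- \<sigma> * (t - s))" for s
  have c1: "continuous_on {0..t} (\<lambda>s. E (t - s))"
    by (rule continuous_on_compose2[OF Econt]) (auto intro!: continuous_intros)
  have wcont: "continuous_on {0..t} w"
    unfolding w_def by (rule bounded_bilinear.continuous_on[OF bounded_bilinear_app c1 xcont])
  have gder: "(g has_real_derivative g' s) (at s)" if "s \<in> {0..t}" for s
    unfolding g_def g'_def using sg by (auto intro!: derivative_eq_intros simp: field_simps)
  have dini: "eventually (\<lambda>h. s + h \<le> t \<longrightarrow> norm (w (s+h) - w s) \<le> (g' s + e) * h) (at_right 0)"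
    if s: "s \<in> {0..<t}" and e: "e > 0" for s e
  proof -
    define K where "K = M * exp (- \<sigma> * (t - s))"
    have K: "K > 0" using M by (simp add: K_def)
    define \<epsilon>1 where "\<epsilon>1 = e / (4 * K * exp \<sigma>)"
    have e1: "\<epsilon>1 > 0" using K e by (simp add: \<epsilon>1_def)
    define NA where "NA = norm L"
    have NA: "NA \<ge> 0" by (simp add: NA_def)
    have pos: "\<epsilon>1 / (NA + 1) > 0" using e1 NA by simp
    have "s \<in> {0..t}" using s by auto
    from continuous_on_iff[THEN iffD1, rule_format, OF xcont this pos]
    obtain \<delta> where \<delta>: "\<delta> > 0" and \<delta>x: "\<And>r. r \<in> {0..t} \<Longrightarrow> dist r s < \<delta> \<Longrightarrow> dist (x r) (x s) < \<epsilon>1 / (NA + 1)"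
      by blast
    have ev1: "eventually (\<lambda>h. 0 < h) (at_right (0::real))" by (rule eventually_at_right_less)
    have ev2: "eventually (\<lambda>h. h < min 1 \<delta>) (at_right (0::real))"
      unfolding eventually_at_right_field using \<delta> by (intro exI[where x="min 1 \<delta>"]) auto
    have "((\<lambda>h. K * \<beta> * exp (\<sigma> * h)) \<longlongrightarrow> K * \<beta> * exp (\<sigma> * 0)) (at_right 0)"
      by (intro tendsto_intros)
    then have ev3: "eventually (\<lambda>h. K * \<beta> * exp (\<sigma> * h) < K * \<beta> + e / 2) (at_right 0)"
      using e by (intro order_tendstoD(2)) auto
    have ev4: "eventually (\<lambda>h. norm (E h - 1 - h *\<^sub>R L) \<le> (\<epsilon>1 / (norm (x s) + 1)) * h) (at_right 0)"
      unfolding E_def by (rule E_small) (rule divide_pos_pos[OF e1], rule add_nonneg_pos, simp_all)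
    show ?thesis using ev1 ev2 ev3 ev4
    proof eventually_elim
      case (elim h)
      show ?case
      proof
        assume sh: "s + h \<le> t"
        have s0: "0 \<le> s" using s by simp
        have h0: "0 < h" "h < 1" "h < \<delta>" using elim by auto
        have fint2: "f integrable_on {s..s+h}"
          by (rule integrable_subinterval_real[OF fint]) (use s0 sh h0 in auto)
        have "(f has_integral (x s - x 0 + integral {s..s+h} f)) {0..s+h}"
          by (rule has_integral_combine[of 0 s "s+h"]) (use s0 h0 int[of s] fint2 in \<open>auto simp: f_def\<close>)
        moreover have "(f has_integral (x (s+h) - x 0)) {0..s+h}"
          using int[of "s+h"] s0 h0 by (simp add: f_def)
        ultimately have "x s - x 0 + integral {s..s+h} f = x (s+h) - x 0"
          by (rule has_integral_unique)
        then have xd: "x (s+h) - x s = integral {s..s+h} f"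
          by (simp add: algebra_simps)
        have "((\<lambda>r. A *v x s) has_integral h *\<^sub>R (A *v x s)) {s..s+h}"
          using has_integral_const_real[of "A *v x s" s "s+h"] h0 by simp
        then have "((\<lambda>r. f r - A *v x s) has_integral (integral {s..s+h} f - h *\<^sub>R (A *v x s))) {s..s+h}"
          by (rule has_integral_diff[OF integrable_integral[OF fint2]])
        then have hi: "((\<lambda>r. f r - A *v x s) has_integral (x (s+h) - x s - h *\<^sub>R (A *v x s))) {s..s+h}"
          using xd h0 by simp
        have bnd: "norm (f r - A *v x s) \<le> \<epsilon>1 + \<beta>" if r: "r \<in> {s..s+h}" for r
        proof -
          have r0: "r \<in> {0..t}" "dist r s < \<delta>" using r s0 sh h0 by (auto simp: dist_real_def)
          have "norm (x r - x s) < \<epsilon>1 / (NA + 1)" using \<delta>x[OF r0] by (simp add: dist_norm)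
          then have "NA * norm (x r - x s) \<le> NA * (\<epsilon>1 / (NA + 1))"
            using NA by (intro mult_left_mono) auto
          also have "\<dots> \<le> \<epsilon>1" using NA e1 by (simp add: field_simps)
          finally have n1: "NA * norm (x r - x s) \<le> \<epsilon>1" .
          have "norm (A *v (x r - x s)) \<le> NA * norm (x r - x s)"
            using norm_app[of L "x r - x s"] by (simp add: NA_def L_def)
          then have n2: "norm (A *v (x r - x s)) \<le> \<epsilon>1" using n1 by simp
          have "norm (u r *\<^sub>R B) \<le> \<beta>" using ub[of r] r s0 by (simp add: \<beta>_def mult_left_le_one_le)
          moreover have "f r - A *v x s = A *v (x r - x s) - u r *\<^sub>R B"
            by (simp add: f_def matrix_vector_mult_diff_distrib)
          ultimately show ?thesis using n2 norm_triangle_ineq4[of "A *v (x r - x s)" "u r *\<^sub>R B"] by simp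
        qed
        have I1: "norm (x (s+h) - x s - h *\<^sub>R (A *v x s)) \<le> (\<epsilon>1 + \<beta>) * h"
          using has_integral_bound_real[of "\<epsilon>1 + \<beta>" "{}", OF _ _ hi] bnd e1 h0 by (simp add: \<beta>_def)
        have "norm (app (E h - 1 - h *\<^sub>R L) (x s)) \<le> norm (E h - 1 - h *\<^sub>R L) * norm (x s)"
          by (rule norm_app)
        also have "\<dots> \<le> (\<epsilon>1 / (norm (x s) + 1)) * h * norm (x s)"
          using elim(4) by (intro mult_right_mono) auto
        also have "\<dots> \<le> \<epsilon>1 * h"
        proof -
          have "0 < norm (x s) + 1" by (rule add_nonneg_pos) simp_all
          then have "norm (x s) / (norm (x s) + 1) \<le> 1" by (subst divide_le_eq_1_pos) simp_all
          then have "\<epsilon>1 * h * (norm (x s) / (norm (x s) + 1)) \<le> \<epsilon>1 * h * 1"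
            using e1 h0 by (intro mult_left_mono) auto
          then show ?thesis by simp
        qed
        finally have I2: "norm (app (E h) (x s) - x s - h *\<^sub>R (A *v x s)) \<le> \<epsilon>1 * h"
          by (simp add: app_diff app_scaleR L_def)
        have "x (s+h) - app (E h) (x s) = (x (s+h) - x s - h *\<^sub>R (A *v x s)) - (app (E h) (x s) - x s - h *\<^sub>R (A *v x s))"
          by (simp add: algebra_simps)
        then have "norm (x (s+h) - app (E h) (x s)) \<le> norm (x (s+h) - x s - h *\<^sub>R (A *v x s)) + norm (app (E h) (x s) - x s - h *\<^sub>R (A *v x s))"
          by (metis norm_triangle_ineq4)
        also have "\<dots> \<le> (\<epsilon>1 + \<beta>) * h + \<epsilon>1 * h"
          by (rule add_mono[OF I1 I2])
        also have "\<dots> = (\<beta> + 2 * \<epsilon>1) * h" by (simp add: algebra_simps)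
        finally have D: "norm (x (s+h) - app (E h) (x s)) \<le> (\<beta> + 2 * \<epsilon>1) * h" .
        have Ets: "E (t - s) = E (t - s - h) * E h" using Eadd[of "t - s - h" h] by simp
        have ws: "w s = app (E (t - s - h)) (app (E h) (x s))" unfolding w_def Ets by simp
        have tsh: "t - (s + h) = t - s - h" by simp
        have wsh: "w (s + h) = app (E (t - s - h)) (x (s + h))" unfolding w_def tsh ..
        have wd: "w (s+h) - w s = app (E (t - s - h)) (x (s+h) - app (E h) (x s))"
          unfolding ws wsh by (simp add: app_vdiff)
        have nE: "norm (E (t - s - h)) \<le> K * exp (\<sigma> * h)"
        proof -
          have "norm (E (t - s - h)) \<le> M * exp (- \<sigma> * (t - s - h))" using Eb'[of "t - s - h"] sh by simp
          also have "\<dots> = K * exp (\<sigma> * h)" unfolding K_def by (simp add: mult_exp_exp algebra_simps)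
          finally show ?thesis .
        qed
        have "norm (w (s+h) - w s) \<le> norm (E (t - s - h)) * norm (x (s+h) - app (E h) (x s))"
          unfolding wd by (rule norm_app)
        also have "\<dots> \<le> (K * exp (\<sigma> * h)) * ((\<beta> + 2 * \<epsilon>1) * h)"
          using nE D K by (intro mult_mono) auto
        also have "\<dots> = (K * \<beta> * exp (\<sigma> * h) + 2 * \<epsilon>1 * K * exp (\<sigma> * h)) * h"
          by (simp add: algebra_simps)
        also have "\<dots> \<le> (K * \<beta> + e / 2 + e / 2) * h"
        proof -
          have "exp (\<sigma> * h) \<le> exp \<sigma>" using sg h0 by simp
          then have "2 * \<epsilon>1 * K * exp (\<sigma> * h) \<le> 2 * \<epsilon>1 * K * exp \<sigma>"
            using e1 K by (intro mult_left_mono) auto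
          also have "\<dots> = e / 2" using K by (simp add: \<epsilon>1_def field_simps)
          finally show ?thesis using elim(3) h0 by (intro mult_right_mono) auto
        qed
        also have "\<dots> = (g' s + e) * h" by (simp add: g'_def K_def)
        finally show "norm (w (s+h) - w s) \<le> (g' s + e) * h" .
      qed
    qed
  qed
  have main: "norm (w t - w 0) \<le> g t - g 0"
    by (rule dini_bound[OF t wcont gder dini]) auto
  have wt: "w t = x t" by (simp add: w_def E0)
  have "norm (w 0) \<le> norm (E t) * norm (x 0)" unfolding w_def by (simp add: norm_app)
  also have "\<dots> \<le> M * exp (- \<sigma> * t) * norm (x 0)" using Eb'[OF t] by (intro mult_right_mono) auto
  finally have w0: "norm (w 0) \<le> M * exp (- \<sigma> * t) * norm (x 0)" .
  have gg: "g t - g 0 = M * norm B / \<sigma> * (1 - exp (- \<sigma> * t))"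
    by (simp add: g_def \<beta>_def algebra_simps)
  have "norm (x t) \<le> norm (w 0) + norm (w t - w 0)"
    using wt norm_triangle_ineq[of "w 0" "w t - w 0"] by simp
  then show ?thesis using main w0 gg by simp
qed


theorem mainTheorem8:
  fixes a b :: "nat \<Rightarrow> real"
    and M_initial sigma_slowest :: real
    and x :: "real \<Rightarrow> real^('n::{finite,linorder})"
  assumes "hurwitz (obs_canon a :: real^('n::{finite,linorder})^('n::{finite,linorder}))"
    and "M_initial > 0" and "sigma_slowest > 0"
    and "\<forall>t\<ge>0. mnorm2 (mexp (t *\<^sub>R (obs_canon a :: real^('n::{finite,linorder})^('n::{finite,linorder}))))
                   \<le> M_initial * exp (- sigma_slowest * t)"
    and "relay_solution (obs_canon a) (obs_B b) obs_C x"
    and "norm (x 0) \<le> 2 * M_initial * norm (obs_B b :: real^('n::{finite,linorder})) / sigma_slowest"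
  shows "\<forall>t > ln (2 * M_initial) / sigma_slowest.
           norm (x t) \<le> 2 * M_initial * norm (obs_B b :: real^('n::{finite,linorder})) / sigma_slowest"
proof (intro allI impI)
  fix t :: real
  assume tgt: "t > ln (2 * M_initial) / sigma_slowest"
  define A where "A = (obs_canon a :: ((real, 'n) vec, 'n) vec)"
  define B where "B = (obs_B b :: (real, 'n) vec)"
  define M where "M = M_initial"
  define \<sigma> where "\<sigma> = sigma_slowest"
  have M: "M > 0" and sg: "\<sigma> > 0" using assms(2,3) by (simp_all add: M_def \<sigma>_def)
  from assms(5) obtain u where u1: "\<forall>s\<ge>0. u s \<in> sign_set (obs_C (x s))"
    and u2: "\<forall>t\<ge>0. ((\<lambda>s. A *v x s - u s *\<^sub>R B) has_integral (x t - x 0)) {0..t}"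
    unfolding relay_solution_def A_def B_def by blast
  have ub: "\<bar>u s\<bar> \<le> 1" if "s \<ge> 0" for s
    using u1 that unfolding sign_set_def by (auto split: if_splits)
  have Eb: "norm (exp (r *\<^sub>R sqm_of A)) \<le> M * exp (- \<sigma> * r)" if "r \<ge> 0" for r
    using assms(4) that by (simp add: A_def M_def \<sigma>_def mnorm2_mexp sqm_of_scaleR)
  have "norm (exp (0 *\<^sub>R sqm_of A)) \<le> M * exp (- \<sigma> * 0)" by (rule Eb) simp
  then have M1: "M \<ge> 1" by simp
  have "ln (2 * M) > 0" using M1 by simp
  then have "ln (2 * M) / \<sigma> > 0" using sg by simp
  then have t0: "t > 0" using tgt by (simp add: M_def \<sigma>_def)
  have bound: "norm (x t) \<le> M * exp (- \<sigma> * t) * norm (x 0) + M * norm B / \<sigma> * (1 - exp (- \<sigma> * t))"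
    by (rule main_bound[OF M sg Eb ub u2[rule_format]]) (use t0 in auto)
  have "\<sigma> * t > ln (2 * M)" using tgt sg by (simp add: M_def \<sigma>_def field_simps)
  then have "exp (\<sigma> * t) > exp (ln (2 * M))" by simp
  then have et: "exp (\<sigma> * t) > 2 * M" using M by simp
  have small: "M * exp (- \<sigma> * t) \<le> 1 / 2"
  proof -
    have "M * exp (- \<sigma> * t) = M / exp (\<sigma> * t)" by (simp add: exp_minus field_simps)
    also have "\<dots> \<le> 1 / 2" using et M by (simp add: field_simps)
    finally show ?thesis .
  qed
  define R where "R = 2 * M * norm B / \<sigma>"
  have R0: "R \<ge> 0" unfolding R_def using M sg by simp
  have x0: "norm (x 0) \<le> R" using assms(6) by (simp add: R_def M_def \<sigma>_def B_def)
  have "M * exp (- \<sigma> * t) * norm (x 0) \<le> M * exp (- \<sigma> * t) * R"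
    using x0 M by (intro mult_left_mono) auto
  also have "\<dots> \<le> 1 / 2 * R" using small R0 by (intro mult_right_mono) auto
  finally have p1: "M * exp (- \<sigma> * t) * norm (x 0) \<le> R / 2" by simp
  have "M * norm B / \<sigma> * (1 - exp (- \<sigma> * t)) \<le> M * norm B / \<sigma> * 1"
    using M sg by (intro mult_left_mono) auto
  then have p2: "M * norm B / \<sigma> * (1 - exp (- \<sigma> * t)) \<le> R / 2" by (simp add: R_def)
  have "norm (x t) \<le> R" using bound p1 p2 by linarith
  then show "norm (x t) \<le> 2 * M_initial * norm (obs_B b :: (real, 'n) vec) / sigma_slowest"
    by (simp add: R_def M_def \<sigma>_def B_def)
qed

end
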